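(* Let $(\omega,\nabla)$ be Poisson-compatible. The quantum torsion of the quantised connection $\nabla_Q$ on $\Omega^1A_1$ is $$(\wedge_1\nabla_Q-d)(\xi)=(\wedge\nabla-d)(\xi)+\tfrac\lambda4(\partial_j\lrcorner\nabla_i\xi)\,\omega^{is}T^j{}_{nm;s}\,dx^m\wedge dx^n .$$
   Context: Coordinates $x^i$, summation convention, $\lrcorner$ interior product, $a_{,i}=\partial_ia$. $\nabla_jdx^i=-\Gamma^i_{jk}dx^k$; torsion $T^i_{jk}=\Gamma^i_{jk}-\Gamma^i_{kj}$; curvature $[\nabla_i,\nabla_j]dx^k=-R^k{}_{mij}dx^m$; semicolon = covariant derivative w.r.t. $\nabla$. Poisson-compatible: $d(\omega^{ij})-\omega^{kj}\nabla_k(dx^i)-\omega^{ik}\nabla_k(dx^j)=0$. Work over $\mathbb{C}[\lambda]/(\lambda^2)$. $\Omega^1A_1$: 1-forms with $a\bullet\xi=a\xi+\frac\lambda2\omega^{ij}a_{,i}\nabla_j\xi$, $\xi\bullet a=a\xi-\frac\lambda2\omega^{ij}a_{,i}\nabla_j\xi$; $\otimes_1$ over the algebra with $a\bullet b=ab+\frac\lambda2\omega^{ij}a_{,i}b_{,j}$; $q(\xi\otimes_1\eta)=\xi\otimes_0\eta+\frac\lambda2\omega^{ij}\nabla_i\xi\otimes_0\nabla_j\eta$. $\nabla_Q\xi=q^{-1}(dx^k\otimes_0\nabla_k\xi)-\frac\lambda2\omega^{ij}dx^k\otimes_1[\nabla_k,\nabla_j]\nabla_i\xi$. $\xi\wedge_1\eta=\xi\wedge\eta+\frac\lambda2\omega^{ij}\nabla_i\xi\wedge\nabla_j\eta+\lambda(-1)^{|\xi|+1}H^{ij}\wedge(\partial_i\lrcorner\xi)\wedge(\partial_j\lrcorner\eta)$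 with $H^{ij}=\frac14\omega^{is}(T^j{}_{nm;s}-2R^j{}_{nms})dx^m\wedge dx^n$. *)

theory Defs
  imports "HOL-Analysis.Analysis" "HOL-Library.Multiset"
begin

text \<open>Local coordinate model on an open chart U of real^'n.
  Christoffel symbols: Gam i j k = Gamma^i_{jk}; Poisson bivector: om i j = omega^{ij}.
  A 1-form is given by its components xi k (xi = xi_k dx^k).
  A 2-form F is represented by F m n meaning sum_{m,n} F m n dx^m wedge dx^n;
  two such representatives are equal as 2-forms iff their antisymmetrisations agree.
  Objects over C[lambda]/(lambda^2) are pairs (order-0 part, order-1 part).\<close>

definition pd :: "'n::finite \<Rightarrow> (real^'n \<Rightarrow> 'a::real_normed_vector) \<Rightarrow> real^'n \<Rightarrow> 'a" where
  "pd i f x = vector_derivative (\<lambda>t. f (x + t *\<^sub>R axis i 1)) (at 0)"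

fun pds :: "'n::finite list \<Rightarrow> (real^'n \<Rightarrow> 'a::real_normed_vector) \<Rightarrow> real^'n \<Rightarrow> 'a" where
  "pds [] f = f"
| "pds (i # is) f = pd i (pds is f)"

definition smooth_in :: "(real^'n::finite \<Rightarrow> 'a::real_normed_vector) \<Rightarrow> (real^'n) set \<Rightarrow> bool" where
  "smooth_in f U \<longleftrightarrow> (\<forall>is. \<forall>x\<in>U. pds is f differentiable (at x))"

definition dx :: "'n::finite \<Rightarrow> 'n \<Rightarrow> real^'n \<Rightarrow> complex" where
  "dx k = (\<lambda>m x. if m = k then 1 else 0)"

text \<open>nabla_j xi for a 1-form xi, with nabla_j dx^i = - Gamma^i_{jk} dx^k.\<close>
definition covd :: "('n::finite \<Rightarrow> 'n \<Rightarrow> 'n \<Rightarrow> real^'n \<Rightarrow> real) \<Rightarrow> 'n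
    \<Rightarrow> ('n \<Rightarrow> real^'n \<Rightarrow> complex) \<Rightarrow> ('n \<Rightarrow> real^'n \<Rightarrow> complex)" where
  "covd Gam j xi = (\<lambda>k x. pd j (xi k) x - (\<Sum>i\<in>UNIV. complex_of_real (Gam i j k x) * xi i x))"

definition tors :: "('n::finite \<Rightarrow> 'n \<Rightarrow> 'n \<Rightarrow> real^'n \<Rightarrow> real) \<Rightarrow> 'n \<Rightarrow> 'n \<Rightarrow> 'n \<Rightarrow> real^'n \<Rightarrow> real" where
  "tors Gam i j k x = Gam i j k x - Gam i k j x"

definition tors_cd :: "('n::finite \<Rightarrow> 'n \<Rightarrow> 'n \<Rightarrow> real^'n \<Rightarrow> real) \<Rightarrow> 'n \<Rightarrow> 'n \<Rightarrow> 'n \<Rightarrow> 'n \<Rightarrow> real^'n \<Rightarrow> real" where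
  "tors_cd Gam j n m s x = pd s (tors Gam j n m) x
     + (\<Sum>p\<in>UNIV. Gam j s p x * tors Gam p n m x)
     - (\<Sum>p\<in>UNIV. Gam p s n x * tors Gam j p m x)
     - (\<Sum>p\<in>UNIV. Gam p s m x * tors Gam j n p x)"

text \<open>Curvature: [nabla_i, nabla_j] dx^k = - R^k_{m i j} dx^m;  curv Gam k m i j = R^k_{mij}.\<close>
definition curv :: "('n::finite \<Rightarrow> 'n \<Rightarrow> 'n \<Rightarrow> real^'n \<Rightarrow> real) \<Rightarrow> 'n \<Rightarrow> 'n \<Rightarrow> 'n \<Rightarrow> 'n \<Rightarrow> real^'n \<Rightarrow> complex" where
  "curv Gam k m i j x = - (covd Gam i (covd Gam j (dx k)) m x - covd Gam j (covd Gam i (dx k)) m x)"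

definition wedge :: "('n::finite \<Rightarrow> real^'n \<Rightarrow> complex) \<Rightarrow> ('n \<Rightarrow> real^'n \<Rightarrow> complex) \<Rightarrow> 'n \<Rightarrow> 'n \<Rightarrow> real^'n \<Rightarrow> complex" where
  "wedge a b = (\<lambda>m n x. a m x * b n x)"

definition dform :: "('n::finite \<Rightarrow> real^'n \<Rightarrow> complex) \<Rightarrow> 'n \<Rightarrow> 'n \<Rightarrow> real^'n \<Rightarrow> complex" where
  "dform xi = (\<lambda>m n x. pd m (xi n) x)"

definition eq2 :: "(real^'n::finite) set \<Rightarrow> ('n \<Rightarrow> 'n \<Rightarrow> real^'n \<Rightarrow> complex) \<Rightarrow> ('n \<Rightarrow> 'n \<Rightarrow> real^'n \<Rightarrow> complex) \<Rightarrow> bool" where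
  "eq2 U F G \<longleftrightarrow> (\<forall>x\<in>U. \<forall>m n. F m n x - F n m x = G m n x - G n m x)"

definition poisson_bivector :: "(real^'n::finite) set \<Rightarrow> ('n \<Rightarrow> 'n \<Rightarrow> real^'n \<Rightarrow> real) \<Rightarrow> bool" where
  "poisson_bivector U om \<longleftrightarrow>
     (\<forall>x\<in>U. \<forall>i j. om i j x = - om j i x) \<and>
     (\<forall>x\<in>U. \<forall>i j k. (\<Sum>l\<in>UNIV. om i l x * pd l (om j k) x + om j l x * pd l (om k i) x
                                  + om k l x * pd l (om i j) x) = 0)"

definition poisson_compatible :: "(real^'n::finite) set \<Rightarrow> ('n \<Rightarrow> 'n \<Rightarrow> real^'n \<Rightarrow> real)
    \<Rightarrow> ('n \<Rightarrow> 'n \<Rightarrow> 'n \<Rightarrow> real^'n \<Rightarrow> real) \<Rightarrow> bool" where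
  "poisson_compatible U om Gam \<longleftrightarrow>
     (\<forall>x\<in>U. \<forall>i j m. complex_of_real (pd m (om i j) x)
        - (\<Sum>k\<in>UNIV. complex_of_real (om k j x) * covd Gam k (dx i) m x)
        - (\<Sum>k\<in>UNIV. complex_of_real (om i k x) * covd Gam k (dx j) m x) = 0)"

type_synonym ('n) form1 = "'n \<Rightarrow> real^'n \<Rightarrow> complex"

definition ldx :: "'n::finite \<Rightarrow> ('n form1 \<times> 'n form1)" where
  "ldx k = (dx k, \<lambda>m x. 0)"

definition lcovd :: "('n::finite \<Rightarrow> 'n \<Rightarrow> 'n \<Rightarrow> real^'n \<Rightarrow> real) \<Rightarrow> 'n
    \<Rightarrow> ('n form1 \<times> 'n form1) \<Rightarrow> ('n form1 \<times> 'n form1)" where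
  "lcovd Gam j a = (covd Gam j (fst a), covd Gam j (snd a))"

text \<open>multiplication by lambda\<close>
definition lsc :: "('n::finite form1 \<times> 'n form1) \<Rightarrow> ('n form1 \<times> 'n form1)" where
  "lsc a = (\<lambda>k x. 0, fst a)"

definition lmul :: "(real^'n::finite \<Rightarrow> complex) \<Rightarrow> ('n form1 \<times> 'n form1) \<Rightarrow> ('n form1 \<times> 'n form1)" where
  "lmul c a = (\<lambda>k x. c x * fst a k x, \<lambda>k x. c x * snd a k x)"

definition lsub :: "('n::finite form1 \<times> 'n form1) \<Rightarrow> ('n form1 \<times> 'n form1) \<Rightarrow> ('n form1 \<times> 'n form1)" where
  "lsub a b = (\<lambda>k x. fst a k x - fst b k x, \<lambda>k x. snd a k x - snd b k x)"

definition lcomm :: "('n::finite \<Rightarrow> 'n \<Rightarrow> 'n \<Rightarrow> real^'n \<Rightarrow> real) \<Rightarrow> 'n \<Rightarrow> 'n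
    \<Rightarrow> ('n form1 \<times> 'n form1) \<Rightarrow> ('n form1 \<times> 'n form1)" where
  "lcomm Gam k j eta = lsub (lcovd Gam k (lcovd Gam j eta)) (lcovd Gam j (lcovd Gam k eta))"

text \<open>Tensors in Omega^1 otimes Omega^1 (both otimes_0 and otimes_1) are represented by
  finite formal sums (multisets) of elementary tensors of lambda-1-forms.
  q^{-1}, to first order in lambda: q^{-1}(a otimes_0 b) = a otimes_1 b - lambda/2 omega^{ij} nabla_i a otimes_1 nabla_j b.\<close>
definition qinv :: "('n::finite \<Rightarrow> 'n \<Rightarrow> real^'n \<Rightarrow> real) \<Rightarrow> ('n \<Rightarrow> 'n \<Rightarrow> 'n \<Rightarrow> real^'n \<Rightarrow> real)
    \<Rightarrow> (('n form1 \<times> 'n form1) \<times> ('n form1 \<times> 'n form1)) multiset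
    \<Rightarrow> (('n form1 \<times> 'n form1) \<times> ('n form1 \<times> 'n form1)) multiset" where
  "qinv om Gam M = sum_mset (image_mset (\<lambda>(a, b). {#(a, b)#} +
      image_mset (\<lambda>(i, j). (lsc (lmul (\<lambda>x. - complex_of_real (om i j x) / 2) (lcovd Gam i a)),
                             lcovd Gam j b)) (mset_set UNIV)) M)"

definition nablaQ :: "('n::finite \<Rightarrow> 'n \<Rightarrow> real^'n \<Rightarrow> real) \<Rightarrow> ('n \<Rightarrow> 'n \<Rightarrow> 'n \<Rightarrow> real^'n \<Rightarrow> real)
    \<Rightarrow> ('n form1 \<times> 'n form1) \<Rightarrow> (('n form1 \<times> 'n form1) \<times> ('n form1 \<times> 'n form1)) multiset" where
  "nablaQ om Gam xi =
     qinv om Gam (image_mset (\<lambda>k. (ldx k, lcovd Gam k xi)) (mset_set UNIV))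
     + image_mset (\<lambda>(i, j, k). (lsc (lmul (\<lambda>x. - complex_of_real (om i j x) / 2) (ldx k)),
                                lcomm Gam k j (lcovd Gam i xi))) (mset_set UNIV)"

definition Hform :: "('n::finite \<Rightarrow> 'n \<Rightarrow> real^'n \<Rightarrow> real) \<Rightarrow> ('n \<Rightarrow> 'n \<Rightarrow> 'n \<Rightarrow> real^'n \<Rightarrow> real)
    \<Rightarrow> 'n \<Rightarrow> 'n \<Rightarrow> 'n \<Rightarrow> 'n \<Rightarrow> real^'n \<Rightarrow> complex" where
  "Hform om Gam i j m n x = (1/4) * (\<Sum>s\<in>UNIV. complex_of_real (om i s x) *
      (complex_of_real (tors_cd Gam j n m s x) - 2 * curv Gam j n m s x))"

text \<open>xi wedge_1 eta for 1-forms (|xi| = 1, so the sign (-1)^{|xi|+1} is +1).\<close>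
definition wedge1 :: "('n::finite \<Rightarrow> 'n \<Rightarrow> real^'n \<Rightarrow> real) \<Rightarrow> ('n \<Rightarrow> 'n \<Rightarrow> 'n \<Rightarrow> real^'n \<Rightarrow> real)
    \<Rightarrow> ('n form1 \<times> 'n form1) \<Rightarrow> ('n form1 \<times> 'n form1)
    \<Rightarrow> ('n \<Rightarrow> 'n \<Rightarrow> real^'n \<Rightarrow> complex) \<times> ('n \<Rightarrow> 'n \<Rightarrow> real^'n \<Rightarrow> complex)" where
  "wedge1 om Gam a b =
     (wedge (fst a) (fst b),
      \<lambda>m n x. wedge (fst a) (snd b) m n x + wedge (snd a) (fst b) m n x
        + (\<Sum>i\<in>UNIV. \<Sum>j\<in>UNIV. complex_of_real (om i j x) / 2
              * wedge (covd Gam i (fst a)) (covd Gam j (fst b)) m n x)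
        + (\<Sum>i\<in>UNIV. \<Sum>j\<in>UNIV. Hform om Gam i j m n x * fst a i x * fst b j x))"

definition Wedge1 :: "('n::finite \<Rightarrow> 'n \<Rightarrow> real^'n \<Rightarrow> real) \<Rightarrow> ('n \<Rightarrow> 'n \<Rightarrow> 'n \<Rightarrow> real^'n \<Rightarrow> real)
    \<Rightarrow> (('n form1 \<times> 'n form1) \<times> ('n form1 \<times> 'n form1)) multiset
    \<Rightarrow> ('n \<Rightarrow> 'n \<Rightarrow> real^'n \<Rightarrow> complex) \<times> ('n \<Rightarrow> 'n \<Rightarrow> real^'n \<Rightarrow> complex)" where
  "Wedge1 om Gam M =
     (\<lambda>m n x. sum_mset (image_mset (\<lambda>(a, b). fst (wedge1 om Gam a b) m n x) M),
      \<lambda>m n x. sum_mset (image_mset (\<lambda>(a, b). snd (wedge1 om Gam a b) m n x) M))"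

definition qtorsion :: "('n::finite \<Rightarrow> 'n \<Rightarrow> real^'n \<Rightarrow> real) \<Rightarrow> ('n \<Rightarrow> 'n \<Rightarrow> 'n \<Rightarrow> real^'n \<Rightarrow> real)
    \<Rightarrow> ('n form1 \<times> 'n form1)
    \<Rightarrow> ('n \<Rightarrow> 'n \<Rightarrow> real^'n \<Rightarrow> complex) \<times> ('n \<Rightarrow> 'n \<Rightarrow> real^'n \<Rightarrow> complex)" where
  "qtorsion om Gam xi =
     (\<lambda>m n x. fst (Wedge1 om Gam (nablaQ om Gam xi)) m n x - dform (fst xi) m n x,
      \<lambda>m n x. snd (Wedge1 om Gam (nablaQ om Gam xi)) m n x - dform (snd xi) m n x)"

definition ctorsion :: "('n::finite \<Rightarrow> 'n \<Rightarrow> 'n \<Rightarrow> real^'n \<Rightarrow> real) \<Rightarrow> 'n form1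
    \<Rightarrow> 'n \<Rightarrow> 'n \<Rightarrow> real^'n \<Rightarrow> complex" where
  "ctorsion Gam eta = (\<lambda>m n x. (\<Sum>j\<in>UNIV. wedge (dx j) (covd Gam j eta) m n x) - dform eta m n x)"

end

theory Submission
  imports Defs
begin


lemma hvd_line:
  assumes "(f has_derivative D) (at (p + t0 *\<^sub>R v))"
  shows "((\<lambda>t. f (p + t *\<^sub>R v)) has_vector_derivative D v) (at t0)"
proof -
  have 1: "((\<lambda>t. p + t *\<^sub>R v) has_derivative (\<lambda>t. t *\<^sub>R v)) (at t0)"
    by (auto intro!: derivative_eq_intros)
  have 2: "((\<lambda>t. f (p + t *\<^sub>R v)) has_derivative (\<lambda>t. D (t *\<^sub>R v))) (at t0)"
    using has_derivative_compose[OF 1] assms by blast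
  have "linear D" using assms has_derivative_linear by blast
  then have "(\<lambda>t. D (t *\<^sub>R v)) = (\<lambda>t. t *\<^sub>R D v)" by (simp add: linear_scale)
  with 2 show ?thesis by (simp add: has_vector_derivative_def)
qed

lemma pd_eq:
  assumes "(f has_derivative D) (at q)"
  shows "pd i f q = D (axis i 1)"
proof -
  have "((\<lambda>t. f (q + t *\<^sub>R axis i 1)) has_vector_derivative D (axis i 1)) (at 0)"
    using hvd_line[of f D q 0] assms by simp
  then show ?thesis unfolding pd_def by (rule vector_derivative_at)
qed

lemma pd_hvd:
  assumes "f differentiable at (p + t0 *\<^sub>R axis i 1)"
  shows "((\<lambda>t. f (p + t *\<^sub>R axis i 1)) has_vector_derivative pd i f (p + t0 *\<^sub>R axis i 1)) (at t0)"
proof -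
  obtain D where D: "(f has_derivative D) (at (p + t0 *\<^sub>R axis i 1))"
    using assms unfolding differentiable_def by blast
  show ?thesis using hvd_line[OF D] pd_eq[OF D] by simp
qed

lemma pd_hvd0:
  assumes "f differentiable at p"
  shows "((\<lambda>t. f (p + t *\<^sub>R axis i 1)) has_vector_derivative pd i f p) (at 0)"
  using pd_hvd[of f p 0 i] assms by simp

lemma mvt_vec:
  fixes \<phi> :: "real \<Rightarrow> 'a::real_normed_vector"
  assumes "0 \<le> h" "\<And>s. s \<in> {0..h} \<Longrightarrow> (\<phi> has_vector_derivative \<phi>' s) (at s)"
    "\<And>s. s \<in> {0..h} \<Longrightarrow> norm (\<phi>' s) \<le> B"
  shows "norm (\<phi> h - \<phi> 0) \<le> B * h"
proof -
  have "norm (\<phi> h - \<phi> 0) \<le> B * norm (h - 0)"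
  proof (rule differentiable_bound[where f'="\<lambda>s t. t *\<^sub>R \<phi>' s"])
    show "convex {0..h}" by simp
    show "(\<phi> has_derivative (\<lambda>t. t *\<^sub>R \<phi>' s)) (at s within {0..h})" if "s \<in> {0..h}" for s
      using assms(2)[OF that] by (simp add: has_vector_derivative_def has_derivative_at_withinI)
    show "onorm (\<lambda>t. t *\<^sub>R \<phi>' s) \<le> B" if "s \<in> {0..h}" for s
    proof -
      have "onorm (\<lambda>t::real. t) = 1" by (rule onorm_id)
      then show ?thesis using onorm_scaleR_left[of "\<lambda>t. t" "\<phi>' s"] assms(3)[OF that]
        by simp
    qed
  qed (use assms in auto)
  then show ?thesis using assms(1) by simp
qed




lemma pd_add:
  assumes "f differentiable at y" "g differentiable at y"
  shows "pd i (\<lambda>x. f x + g x) y = pd i f y + pd i g y"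
proof -
  obtain D E where D: "(f has_derivative D) (at y)" and E: "(g has_derivative E) (at y)"
    using assms unfolding differentiable_def by blast
  show ?thesis using pd_eq[OF has_derivative_add[OF D E]] pd_eq[OF D] pd_eq[OF E] by simp
qed

lemma pd_diff:
  assumes "f differentiable at y" "g differentiable at y"
  shows "pd i (\<lambda>x. f x - g x) y = pd i f y - pd i g y"
proof -
  obtain D E where D: "(f has_derivative D) (at y)" and E: "(g has_derivative E) (at y)"
    using assms unfolding differentiable_def by blast
  show ?thesis using pd_eq[OF has_derivative_diff[OF D E]] pd_eq[OF D] pd_eq[OF E] by simp
qed

lemma pd_minus:
  assumes "f differentiable at y"
  shows "pd i (\<lambda>x. - f x) y = - pd i f y"
proof -
  obtain D where D: "(f has_derivative D) (at y)"
    using assms unfolding differentiable_def by blast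
  show ?thesis using pd_eq[OF has_derivative_minus[OF D]] pd_eq[OF D] by simp
qed

lemma pd_const: "pd i (\<lambda>x. c) y = 0"
  using pd_eq[OF has_derivative_const[of c "at y"]] by simp

lemma pd_mult:
  fixes f g :: "real^'n::finite \<Rightarrow> 'a::real_normed_algebra"
  assumes "f differentiable at y" "g differentiable at y"
  shows "pd i (\<lambda>x. f x * g x) y = f y * pd i g y + pd i f y * g y"
proof -
  obtain D E where D: "(f has_derivative D) (at y)" and E: "(g has_derivative E) (at y)"
    using assms unfolding differentiable_def by blast
  show ?thesis using pd_eq[OF has_derivative_mult[OF D E]] pd_eq[OF D] pd_eq[OF E] by simp
qed

lemma pd_of_real:
  fixes f :: "real^'n::finite \<Rightarrow> real"
  assumes "f differentiable at y"
  shows "pd i (\<lambda>x. complex_of_real (f x)) y = complex_of_real (pd i f y)"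
proof -
  obtain D where D: "(f has_derivative D) (at y)"
    using assms unfolding differentiable_def by blast
  have "((\<lambda>x. complex_of_real (f x)) has_derivative (\<lambda>h. complex_of_real (D h))) (at y)"
    using has_derivative_of_real[OF D] .
  then show ?thesis using pd_eq pd_eq[OF D] by metis
qed

lemma pd_sum:
  assumes "finite A" "\<And>k. k \<in> A \<Longrightarrow> f k differentiable at y"
  shows "pd i (\<lambda>x. \<Sum>k\<in>A. f k x) y = (\<Sum>k\<in>A. pd i (f k) y)"
proof -
  obtain D where D: "\<And>k. k \<in> A \<Longrightarrow> (f k has_derivative D k) (at y)"
    using assms(2) unfolding differentiable_def by metis
  have "((\<lambda>x. \<Sum>k\<in>A. f k x) has_derivative (\<lambda>h. \<Sum>k\<in>A. D k h)) (at y)"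
    by (rule has_derivative_sum) (use D in auto)
  from pd_eq[OF this] show ?thesis using pd_eq[OF D] by simp
qed

lemma pd_cong:
  assumes "open U" "y \<in> U" "\<And>z. z \<in> U \<Longrightarrow> f z = g z"
  shows "pd i f y = pd i g y"
proof -
  have "eventually (\<lambda>t. y + t *\<^sub>R axis i 1 \<in> U) (nhds 0)"
  proof -
    obtain e where e: "e > 0" "ball y e \<subseteq> U" using assms(1,2) open_contains_ball by blast
    have "y + t *\<^sub>R axis i 1 \<in> U" if "dist t 0 < e" for t :: real
    proof -
      have "dist y (y + t *\<^sub>R axis i 1) = \<bar>t\<bar>" by (simp add: dist_norm)
      then show ?thesis using e that by auto
    qed
    then show ?thesis unfolding eventually_nhds_metric using e by blast
  qed
  then have "eventually (\<lambda>t. t \<in> UNIV \<longrightarrow> f (y + t *\<^sub>R axis i 1) = g (y + t *\<^sub>R axis i 1)) (nhds 0)"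
    by (rule eventually_mono) (use assms(3) in auto)
  then show ?thesis unfolding pd_def
    by (intro vector_derivative_cong_eq) auto
qed

lemma diff_cong:
  assumes "open U" "y \<in> U" "\<And>z. z \<in> U \<Longrightarrow> f z = g z" "f differentiable at y"
  shows "g differentiable at y"
  using assms has_derivative_transform_within_open unfolding differentiable_def by metis

lemma diff_of_real:
  fixes f :: "real^'n::finite \<Rightarrow> real"
  assumes "f differentiable at y"
  shows "(\<lambda>x. complex_of_real (f x)) differentiable at y"
  using assms has_derivative_of_real unfolding differentiable_def by blast

fun Dk :: "nat \<Rightarrow> (real^'n::finite) set \<Rightarrow> (real^'n \<Rightarrow> 'a::real_normed_vector) \<Rightarrow> bool" where
  "Dk 0 U f = (\<forall>y\<in>U. f differentiable at y)"
| "Dk (Suc k) U f = ((\<forall>y\<in>U. f differentiable at y) \<and> (\<forall>i. Dk k U (pd i f)))"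

definition Dinf where "Dinf U f = (\<forall>k. Dk k U f)"

lemma Dk_diff_at: "Dk k U f \<Longrightarrow> y \<in> U \<Longrightarrow> f differentiable at y"
  by (cases k) auto

lemma Dk_mono: "Dk (Suc k) U f \<Longrightarrow> Dk k U f"
  by (induction k arbitrary: f) auto

lemma Dk_cong: "open U \<Longrightarrow> Dk k U f \<Longrightarrow> (\<And>z. z \<in> U \<Longrightarrow> f z = g z) \<Longrightarrow> Dk k U g"
proof (induction k arbitrary: f g)
  case 0 then show ?case using diff_cong by (simp, metis)
next
  case (Suc k)
  have "Dk k U (pd i g)" for i
    using Suc.IH[of "pd i f" "pd i g"] Suc.prems pd_cong[of U _ f g i] by auto
  then show ?case using Suc.prems diff_cong[of U _ f g] by auto
qed

lemma pds_pd: "pds is (pd i f) = pds (is @ [i]) f"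
  by (induction "is") auto

lemma smooth_Dk: "smooth_in f U \<Longrightarrow> Dk k U f"
proof (induction k arbitrary: f)
  case 0 then show ?case unfolding smooth_in_def using pds.simps(1) by (metis Dk.simps(1))
next
  case (Suc k)
  have "smooth_in (pd i f) U" for i
    using Suc.prems unfolding smooth_in_def pds_pd by blast
  then show ?case using Suc unfolding smooth_in_def by (metis Dk.simps(2) pds.simps(1))
qed

lemma smooth_Dinf: "smooth_in f U \<Longrightarrow> Dinf U f"
  unfolding Dinf_def using smooth_Dk by blast

lemma pd_const_fun: "pd i (\<lambda>x. c) = (\<lambda>x. 0)"
  by (rule ext) (rule pd_const)

lemma Dk_const: "Dk k U (\<lambda>x. c)"
proof (induction k arbitrary: c)
  case 0 then show ?case by simp
next
  case (Suc k)
  then show ?case by (simp add: pd_const_fun)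
qed

lemma Dk_add: "open U \<Longrightarrow> Dk k U f \<Longrightarrow> Dk k U g \<Longrightarrow> Dk k U (\<lambda>x. f x + g x)"
proof (induction k arbitrary: f g)
  case 0 then show ?case by auto
next
  case (Suc k)
  have "Dk k U (pd i (\<lambda>x. f x + g x))" for i
  proof -
    have "Dk k U (\<lambda>x. pd i f x + pd i g x)" using Suc by simp
    then show ?thesis by (rule Dk_cong[OF Suc.prems(1)]) (use Suc.prems in \<open>simp add: pd_add\<close>)
  qed
  then show ?case using Suc.prems by auto
qed

lemma Dk_minus: "open U \<Longrightarrow> Dk k U f \<Longrightarrow> Dk k U (\<lambda>x. - f x)"
proof (induction k arbitrary: f)
  case 0 then show ?case by auto
next
  case (Suc k)
  have "Dk k U (pd i (\<lambda>x. - f x))" for i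
  proof -
    have "Dk k U (\<lambda>x. - pd i f x)" using Suc by simp
    then show ?thesis by (rule Dk_cong[OF Suc.prems(1)]) (use Suc.prems in \<open>simp add: pd_minus\<close>)
  qed
  then show ?case using Suc.prems by auto
qed

lemma Dk_diff: "open U \<Longrightarrow> Dk k U f \<Longrightarrow> Dk k U g \<Longrightarrow> Dk k U (\<lambda>x. f x - g x)"
  using Dk_add[of U k f "\<lambda>x. - g x"] Dk_minus[of U k g] by simp

lemma Dk_sum: assumes "open U" "finite A" "\<And>a. a \<in> A \<Longrightarrow> Dk k U (f a)" shows "Dk k U (\<lambda>x. \<Sum>a\<in>A. f a x)"
  using assms(2,3)
proof (induction A rule: finite_induct)
  case empty then show ?case using Dk_const[of k U 0] by simp
next
  case (insert a F)
  then show ?case using Dk_add[OF assms(1), of k "f a" "\<lambda>x. \<Sum>a\<in>F. f a x"] by simp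
qed

lemma Dk_mult:
  fixes f g :: "real^'n::finite \<Rightarrow> 'a::real_normed_algebra"
  shows "open U \<Longrightarrow> Dk k U f \<Longrightarrow> Dk k U g \<Longrightarrow> Dk k U (\<lambda>x. f x * g x)"
proof (induction k arbitrary: f g)
  case 0 then show ?case by auto
next
  case (Suc k)
  have "Dk k U (pd i (\<lambda>x. f x * g x))" for i
  proof -
    have "Dk k U (\<lambda>x. f x * pd i g x + pd i f x * g x)"
      using Suc.prems Dk_mono Suc.IH Dk_add by (metis Dk.simps(2))
    then show ?thesis
      by (rule Dk_cong[OF Suc.prems(1)]) (use Suc.prems in \<open>simp add: pd_mult\<close>)
  qed
  then show ?case using Suc.prems by auto
qed

lemma Dk_of_real:
  fixes f :: "real^'n::finite \<Rightarrow> real"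
  shows "open U \<Longrightarrow> Dk k U f \<Longrightarrow> Dk k U (\<lambda>x. complex_of_real (f x))"
proof (induction k arbitrary: f)
  case 0 then show ?case by (auto intro: diff_of_real)
next
  case (Suc k)
  have d: "(\<lambda>x. complex_of_real (f x)) differentiable at y" if "y \<in> U" for y
    using Suc.prems that by (auto intro: diff_of_real)
  have "Dk k U (pd i (\<lambda>x. complex_of_real (f x)))" for i
  proof -
    have "Dk k U (\<lambda>x. complex_of_real (pd i f x))" using Suc by simp
    then show ?thesis by (rule Dk_cong[OF Suc.prems(1)]) (use Suc.prems in \<open>simp add: pd_of_real\<close>)
  qed
  then show ?case using d by auto
qed




lemma schwarz_approx:
  fixes f :: "real^'n::finite \<Rightarrow> 'a::real_normed_vector"
  assumes U: "open U" "x \<in> U" and D: "Dk 2 U f" and e: "\<epsilon> > 0"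
  shows "\<exists>\<delta>>0. \<forall>h. 0 < h \<and> h < \<delta> \<longrightarrow>
     norm (f (x + h *\<^sub>R axis j 1 + h *\<^sub>R axis m 1) - f (x + h *\<^sub>R axis m 1) - f (x + h *\<^sub>R axis j 1) + f x
           - (h * h) *\<^sub>R pd j (pd m f) x) \<le> \<epsilon> * (h * h)"
proof -
  define em :: "real^'n" where "em = axis m 1"
  define ej :: "real^'n" where "ej = axis j 1"
  define A where "A = pd j (pd m f) x"
  have d0: "y \<in> U \<Longrightarrow> f differentiable at y" for y using D by (simp add: numeral_2_eq_2)
  have d1: "y \<in> U \<Longrightarrow> pd i f differentiable at y" for y i using D by (simp add: numeral_2_eq_2)
  have d2: "y \<in> U \<Longrightarrow> pd k (pd i f) differentiable at y" for y i k
    using D by (simp add: numeral_2_eq_2 Dk_diff_at)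
  obtain \<delta>0 where \<delta>0: "\<delta>0 > 0" "ball x \<delta>0 \<subseteq> U" using U open_contains_ball by blast
  have "continuous (at x) (pd j (pd m f))"
    using d2[OF U(2)] differentiable_imp_continuous_within by blast
  then obtain \<delta>1 where \<delta>1: "\<delta>1 > 0" "\<And>y. dist y x < \<delta>1 \<Longrightarrow> dist (pd j (pd m f) y) A < \<epsilon>"
    unfolding continuous_at_eps_delta A_def using e by blast
  define \<delta> where "\<delta> = min \<delta>0 \<delta>1 / 2"
  have "\<delta> > 0" using \<delta>0 \<delta>1 by (simp add: \<delta>_def)
  have pt: "x + t *\<^sub>R em + s *\<^sub>R ej \<in> U \<and> dist (x + t *\<^sub>R em + s *\<^sub>R ej) x < \<delta>1"
    if "0 \<le> t" "t \<le> h" "0 \<le> s" "s \<le> h" "h < \<delta>" for t s h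
  proof -
    have "norm (t *\<^sub>R em + s *\<^sub>R ej) \<le> norm (t *\<^sub>R em) + norm (s *\<^sub>R ej)" by (rule norm_triangle_ineq)
    also have "\<dots> = t + s" using that by (simp add: em_def ej_def)
    finally have "dist (x + t *\<^sub>R em + s *\<^sub>R ej) x < min \<delta>0 \<delta>1"
      using that by (simp add: dist_norm \<delta>_def add.assoc)
    then show ?thesis using \<delta>0 by (auto simp: dist_commute)
  qed
  have main: "norm (f (x + h *\<^sub>R ej + h *\<^sub>R em) - f (x + h *\<^sub>R em) - f (x + h *\<^sub>R ej) + f x
           - (h * h) *\<^sub>R A) \<le> \<epsilon> * (h * h)" if h: "0 < h" "h < \<delta>" for h
  proof -
    define g where "g t = f (x + h *\<^sub>R ej + t *\<^sub>R em) - f (x + t *\<^sub>R em) - (t * h) *\<^sub>R A" for t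
    define g' where "g' t = pd m f (x + h *\<^sub>R ej + t *\<^sub>R em) - pd m f (x + t *\<^sub>R em) - h *\<^sub>R A" for t
    have "(g has_vector_derivative g' t) (at t)" if t: "t \<in> {0..h}" for t
    proof -
      have p1: "x + h *\<^sub>R ej + t *\<^sub>R em \<in> U" using pt[of t h h] t h by (simp add: add_ac)
      have "x + t *\<^sub>R em + 0 *\<^sub>R ej \<in> U" using pt[of t h 0] t h by auto
      then have p2: "x + t *\<^sub>R em \<in> U" by simp
      have a: "((\<lambda>t. f (x + h *\<^sub>R ej + t *\<^sub>R em)) has_vector_derivative pd m f (x + h *\<^sub>R ej + t *\<^sub>R em)) (at t)"
        using pd_hvd[of f "x + h *\<^sub>R ej" t m] d0[OF p1] by (simp add: em_def)
      have b: "((\<lambda>t. f (x + t *\<^sub>R em)) has_vector_derivative pd m f (x + t *\<^sub>R em)) (at t)"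
        using pd_hvd[of f x t m] d0[OF p2] by (simp add: em_def)
      have c: "((\<lambda>t. (t * h) *\<^sub>R A) has_vector_derivative h *\<^sub>R A) (at t)"
        by (auto intro!: derivative_eq_intros simp: has_vector_derivative_def scaleR_scaleR)
      show ?thesis unfolding g_def g'_def using has_vector_derivative_diff[OF has_vector_derivative_diff[OF a b] c] .
    qed
    moreover have "norm (g' t) \<le> \<epsilon> * h" if t: "t \<in> {0..h}" for t
    proof -
      define \<phi> where "\<phi> s = pd m f (x + t *\<^sub>R em + s *\<^sub>R ej) - s *\<^sub>R A" for s
      define \<phi>' where "\<phi>' s = pd j (pd m f) (x + t *\<^sub>R em + s *\<^sub>R ej) - A" for s
      have "norm (\<phi> h - \<phi> 0) \<le> \<epsilon> * h"
      proof (rule mvt_vec)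
        show "0 \<le> h" using h by simp
        show "(\<phi> has_vector_derivative \<phi>' s) (at s)" if s: "s \<in> {0..h}" for s
        proof -
          have "x + t *\<^sub>R em + s *\<^sub>R ej \<in> U" using pt[of t h s] s t h by simp
          then have "((\<lambda>s. pd m f (x + t *\<^sub>R em + s *\<^sub>R ej)) has_vector_derivative pd j (pd m f) (x + t *\<^sub>R em + s *\<^sub>R ej)) (at s)"
            using pd_hvd[of "pd m f" "x + t *\<^sub>R em" s j] d1 by (simp add: ej_def)
          moreover have "((\<lambda>s. s *\<^sub>R A) has_vector_derivative A) (at s)"
            by (auto intro!: derivative_eq_intros simp: has_vector_derivative_def)
          ultimately show ?thesis unfolding \<phi>_def \<phi>'_def by (rule has_vector_derivative_diff)
        qed
        show "norm (\<phi>' s) \<le> \<epsilon>" if s: "s \<in> {0..h}" for s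
          using \<delta>1(2)[of "x + t *\<^sub>R em + s *\<^sub>R ej"] pt[of t h s] s t h
          by (simp add: \<phi>'_def dist_norm)
      qed
      moreover have "\<phi> h - \<phi> 0 = g' t" by (simp add: \<phi>_def g'_def add_ac)
      ultimately show ?thesis by simp
    qed
    ultimately have "norm (g h - g 0) \<le> (\<epsilon> * h) * h"
      using h by (intro mvt_vec) auto
    moreover have "g h - g 0 = f (x + h *\<^sub>R ej + h *\<^sub>R em) - f (x + h *\<^sub>R em) - f (x + h *\<^sub>R ej) + f x
           - (h * h) *\<^sub>R A" by (simp add: g_def algebra_simps)
    ultimately show ?thesis by (simp add: mult.assoc)
  qed
  show ?thesis using main \<open>\<delta> > 0\<close> unfolding em_def ej_def A_def by blast
qed

lemma schwarz:
  fixes f :: "real^'n::finite \<Rightarrow> 'a::real_normed_vector"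
  assumes U: "open U" "x \<in> U" and D: "Dk 2 U f"
  shows "pd j (pd m f) x = pd m (pd j f) x"
proof (rule ccontr)
  define A where "A = pd j (pd m f) x"
  define B where "B = pd m (pd j f) x"
  assume "pd j (pd m f) x \<noteq> pd m (pd j f) x"
  then have ne: "norm (A - B) > 0" by (simp add: A_def B_def)
  define \<epsilon> where "\<epsilon> = norm (A - B) / 4"
  have e: "\<epsilon> > 0" using ne by (simp add: \<epsilon>_def)
  define \<Delta> where "\<Delta> h = f (x + h *\<^sub>R axis j 1 + h *\<^sub>R axis m 1) - f (x + h *\<^sub>R axis m 1) - f (x + h *\<^sub>R axis j 1) + f x" for h
  obtain \<delta>a where a: "\<delta>a > 0" "\<And>h. 0 < h \<Longrightarrow> h < \<delta>a \<Longrightarrow> norm (\<Delta> h - (h * h) *\<^sub>R A) \<le> \<epsilon> * (h * h)"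
    using schwarz_approx[OF U D e, of j m] unfolding \<Delta>_def A_def by blast
  obtain \<delta>b where b: "\<delta>b > 0" "\<And>h. 0 < h \<Longrightarrow> h < \<delta>b \<Longrightarrow> norm (\<Delta> h - (h * h) *\<^sub>R B) \<le> \<epsilon> * (h * h)"
  proof -
    have sw: "f (x + h *\<^sub>R axis m 1 + h *\<^sub>R axis j 1) - f (x + h *\<^sub>R axis j 1) - f (x + h *\<^sub>R axis m 1) + f x = \<Delta> h" for h
      by (simp add: \<Delta>_def algebra_simps)
    show ?thesis using schwarz_approx[OF U D e, of m j] that unfolding sw B_def by blast
  qed
  define h where "h = min \<delta>a \<delta>b / 2"
  have h: "0 < h" "h < \<delta>a" "h < \<delta>b" using a b by (auto simp: h_def)
  have "norm ((h * h) *\<^sub>R (A - B)) \<le> norm (\<Delta> h - (h * h) *\<^sub>R B) + norm (\<Delta> h - (h * h) *\<^sub>R A)"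
    using norm_triangle_ineq4[of "\<Delta> h - (h * h) *\<^sub>R B" "\<Delta> h - (h * h) *\<^sub>R A"]
    by (simp add: algebra_simps)
  also have "\<dots> \<le> 2 * \<epsilon> * (h * h)" using a(2)[OF h(1,2)] b(2)[OF h(1,3)] by simp
  finally have "(h * h) * norm (A - B) \<le> (h * h) * (2 * \<epsilon>)" by (simp add: mult_ac)
  then have "norm (A - B) \<le> 2 * \<epsilon>" using h(1) by (simp add: mult_le_cancel_left)
  then show False using ne by (simp add: \<epsilon>_def)
qed




lemma Dinf_diff_at: "Dinf U f \<Longrightarrow> y \<in> U \<Longrightarrow> f differentiable at y"
  unfolding Dinf_def using Dk_diff_at by blast
lemma Dinf_pd: "Dinf U f \<Longrightarrow> Dinf U (pd i f)"
  unfolding Dinf_def by (metis Dk.simps(2))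
lemma Dinf_Dk2: "Dinf U f \<Longrightarrow> Dk 2 U f"
  unfolding Dinf_def by blast
lemma Dinf_add: "open U \<Longrightarrow> Dinf U f \<Longrightarrow> Dinf U g \<Longrightarrow> Dinf U (\<lambda>x. f x + g x)"
  unfolding Dinf_def using Dk_add by blast
lemma Dinf_diff: "open U \<Longrightarrow> Dinf U f \<Longrightarrow> Dinf U g \<Longrightarrow> Dinf U (\<lambda>x. f x - g x)"
  unfolding Dinf_def using Dk_diff by blast
lemma Dinf_mult:
  fixes f g :: "real^'n::finite \<Rightarrow> 'a::real_normed_algebra"
  shows "open U \<Longrightarrow> Dinf U f \<Longrightarrow> Dinf U g \<Longrightarrow> Dinf U (\<lambda>x. f x * g x)"
  unfolding Dinf_def using Dk_mult by blast
lemma Dinf_of_real: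
  fixes f :: "real^'n::finite \<Rightarrow> real"
  shows "open U \<Longrightarrow> Dinf U f \<Longrightarrow> Dinf U (\<lambda>x. complex_of_real (f x))"
  unfolding Dinf_def using Dk_of_real by blast
lemma Dinf_sum: "open U \<Longrightarrow> finite A \<Longrightarrow> (\<And>a. a \<in> A \<Longrightarrow> Dinf U (f a)) \<Longrightarrow> Dinf U (\<lambda>x. \<Sum>a\<in>A. f a x)"
  unfolding Dinf_def using Dk_sum by blast

lemma Dinf_covd:
  assumes "open U" "\<And>i j k. Dinf U (Gam i j k)" "\<And>k. Dinf U (\<eta> k)"
  shows "Dinf U (covd Gam i \<eta> k)"
proof -
  have "Dinf U (\<lambda>x. pd i (\<eta> k) x - (\<Sum>p\<in>UNIV. complex_of_real (Gam p i k x) * \<eta> p x))"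
    using assms by (intro Dinf_diff Dinf_sum Dinf_mult Dinf_of_real Dinf_pd) auto
  then show ?thesis unfolding covd_def by simp
qed

lemma pd_covd:
  assumes "\<And>q. Gam q j n differentiable at x" "\<And>q. \<eta> q differentiable at x"
    "pd j (\<eta> n) differentiable at x"
  shows "pd m (covd Gam j \<eta> n) x = pd m (pd j (\<eta> n)) x
     - (\<Sum>q\<in>UNIV. complex_of_real (Gam q j n x) * pd m (\<eta> q) x
                  + complex_of_real (pd m (Gam q j n) x) * \<eta> q x)"
proof -
  have dq: "(\<lambda>y. complex_of_real (Gam q j n y)) differentiable at x" for q
    using assms(1) diff_of_real by blast
  have "pd m (covd Gam j \<eta> n) x = pd m (\<lambda>y. pd j (\<eta> n) y - (\<Sum>q\<in>UNIV. complex_of_real (Gam q j n y) * \<eta> q y)) x"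
    unfolding covd_def by simp
  also have "\<dots> = pd m (pd j (\<eta> n)) x - pd m (\<lambda>y. \<Sum>q\<in>UNIV. complex_of_real (Gam q j n y) * \<eta> q y) x"
    using assms dq by (intro pd_diff) (auto intro!: differentiable_sum differentiable_mult)
  also have "pd m (\<lambda>y. \<Sum>q\<in>UNIV. complex_of_real (Gam q j n y) * \<eta> q y) x
     = (\<Sum>q\<in>UNIV. pd m (\<lambda>y. complex_of_real (Gam q j n y) * \<eta> q y) x)"
    using assms dq by (intro pd_sum) (auto intro!: differentiable_mult)
  also have "\<dots> = (\<Sum>q\<in>UNIV. complex_of_real (Gam q j n x) * pd m (\<eta> q) x
                  + complex_of_real (pd m (Gam q j n) x) * \<eta> q x)"
    using assms dq by (intro sum.cong refl) (simp add: pd_mult pd_of_real)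
  finally show ?thesis .
qed

lemma covd_dx: "covd Gam j (dx k) m = (\<lambda>y. - complex_of_real (Gam k j m y))"
  unfolding covd_def dx_def by (simp add: pd_const_fun if_distrib cong: if_cong)

lemma curv_eq:
  assumes "\<And>a b c. Gam a b c differentiable at x"
  shows "curv Gam k n m j x = complex_of_real (pd m (Gam k j n) x - pd j (Gam k m n) x
     - (\<Sum>p\<in>UNIV. Gam p m n x * Gam k j p x) + (\<Sum>p\<in>UNIV. Gam p j n x * Gam k m p x))"
proof -
  have d: "pd i (\<lambda>y. - complex_of_real (Gam a b c y)) x = - complex_of_real (pd i (Gam a b c) x)" for i a b c
    using assms pd_minus pd_of_real diff_of_real by metis
  have e: "covd Gam a (covd Gam b (dx k)) n x = - complex_of_real (pd a (Gam k b n) x)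
     + (\<Sum>p\<in>UNIV. complex_of_real (Gam p a n x) * complex_of_real (Gam k b p x))" for a b
    by (simp add: covd_def[of Gam a "covd Gam b (dx k)"] covd_dx d sum_negf)
  show ?thesis
    unfolding curv_def e by (simp add: algebra_simps)
qed




lemma swap_aux:
  fixes G :: "'n::finite \<Rightarrow> complex" and H :: "'n \<Rightarrow> 'n \<Rightarrow> complex" and e :: "'n \<Rightarrow> complex"
  shows "(\<Sum>p\<in>UNIV. G p * (\<Sum>q\<in>UNIV. H q p * e q)) = (\<Sum>k\<in>UNIV. e k * (\<Sum>p\<in>UNIV. G p * H k p))"
proof -
  have "(\<Sum>p\<in>UNIV. G p * (\<Sum>q\<in>UNIV. H q p * e q)) = (\<Sum>p\<in>UNIV. \<Sum>q\<in>UNIV. G p * H q p * e q)"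
    by (simp add: sum_distrib_left mult.assoc)
  also have "\<dots> = (\<Sum>q\<in>UNIV. \<Sum>p\<in>UNIV. G p * H q p * e q)"
    by (rule sum.swap)
  also have "\<dots> = (\<Sum>k\<in>UNIV. e k * (\<Sum>p\<in>UNIV. G p * H k p))"
    by (simp add: sum_distrib_left sum_distrib_right mult.commute)
  finally show ?thesis .
qed

lemma comm:
  assumes U: "open U" "x \<in> U" and G: "\<And>i j k. Dinf U (Gam i j k)" and E: "\<And>k. Dinf U (\<eta> k)"
  shows "covd Gam m (covd Gam j \<eta>) n x - covd Gam j (covd Gam m \<eta>) n x
       = - (\<Sum>k\<in>UNIV. \<eta> k x * curv Gam k n m j x)"
proof -
  have dG: "Gam a b c differentiable at x" for a b c using G U Dinf_diff_at by blast
  have dE: "\<eta> q differentiable at x" for q using E U Dinf_diff_at by blast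
  have dE1: "pd b (\<eta> q) differentiable at x" for b q using E U Dinf_diff_at Dinf_pd by blast
  have ex: "covd Gam a (covd Gam b \<eta>) n x = pd a (covd Gam b \<eta> n) x
      - (\<Sum>p\<in>UNIV. complex_of_real (Gam p a n x) * covd Gam b \<eta> p x)" for a b
    by (simp add: covd_def[of Gam a "covd Gam b \<eta>"])
  have cv: "covd Gam b \<eta> p x = pd b (\<eta> p) x - (\<Sum>q\<in>UNIV. complex_of_real (Gam q b p x) * \<eta> q x)" for b p
    by (simp add: covd_def)
  have pc: "pd a (covd Gam b \<eta> n) x = pd a (pd b (\<eta> n)) x
     - (\<Sum>q\<in>UNIV. complex_of_real (Gam q b n x) * pd a (\<eta> q) x
                  + complex_of_real (pd a (Gam q b n) x) * \<eta> q x)" for a b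
    by (rule pd_covd) (simp_all add: dG dE dE1)
  have sw: "pd m (pd j (\<eta> n)) x = pd j (pd m (\<eta> n)) x"
    using schwarz[OF U Dinf_Dk2[OF E]] .
  have cu: "curv Gam k n m j x = complex_of_real (pd m (Gam k j n) x) - complex_of_real (pd j (Gam k m n) x)
     - (\<Sum>p\<in>UNIV. complex_of_real (Gam p m n x) * complex_of_real (Gam k j p x))
     + (\<Sum>p\<in>UNIV. complex_of_real (Gam p j n x) * complex_of_real (Gam k m p x))" for k
    using curv_eq[OF dG] by simp
  define G where "G p a b = complex_of_real (Gam p a b x)" for p a b
  define dG where "dG i p a b = complex_of_real (pd i (Gam p a b) x)" for i p a b
  define e where "e q = \<eta> q x" for q
  define de where "de i q = pd i (\<eta> q) x" for i q
  define P where "P = pd j (pd m (\<eta> n)) x"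
  have L: "covd Gam a (covd Gam b \<eta>) n x = pd a (pd b (\<eta> n)) x
     - ((\<Sum>q\<in>UNIV. G q b n * de a q) + (\<Sum>q\<in>UNIV. dG a q b n * e q))
     - ((\<Sum>p\<in>UNIV. G p a n * de b p) - (\<Sum>p\<in>UNIV. G p a n * (\<Sum>q\<in>UNIV. G q b p * e q)))" for a b
    unfolding ex cv pc G_def dG_def e_def de_def
    by (simp add: sum.distrib sum_subtractf right_diff_distrib)
  have R: "(\<Sum>k\<in>UNIV. \<eta> k x * curv Gam k n m j x) =
     (\<Sum>k\<in>UNIV. dG m k j n * e k) - (\<Sum>k\<in>UNIV. dG j k m n * e k)
     - (\<Sum>p\<in>UNIV. G p m n * (\<Sum>q\<in>UNIV. G q j p * e q))
     + (\<Sum>p\<in>UNIV. G p j n * (\<Sum>q\<in>UNIV. G q m p * e q))"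
    unfolding cu swap_aux G_def dG_def e_def
    by (simp add: sum.distrib sum_subtractf right_diff_distrib distrib_left mult.commute)
  show ?thesis
    unfolding L R sw by (simp add: algebra_simps)
qed




lemma final_alg:
  fixes om' \<eta> Tc Cv :: "'n::finite \<Rightarrow> 'n \<Rightarrow> complex"
  shows "(\<Sum>k\<in>UNIV. \<Sum>j\<in>UNIV. ((1/4) * (\<Sum>s\<in>UNIV. om' k s * (Tc j s - 2 * Cv j s))) * \<eta> k j)
    + (\<Sum>i\<in>UNIV. \<Sum>j\<in>UNIV. (- om' i j / 2) * (- (\<Sum>k\<in>UNIV. \<eta> i k * Cv k j)))
    = (1/4) * (\<Sum>i\<in>UNIV. \<Sum>j\<in>UNIV. \<Sum>s\<in>UNIV. \<eta> i j * om' i s * Tc j s)"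
proof -
  have a: "(\<Sum>k\<in>UNIV. \<Sum>j\<in>UNIV. ((1/4) * (\<Sum>s\<in>UNIV. om' k s * (Tc j s - 2 * Cv j s))) * \<eta> k j)
     = (1/4) * (\<Sum>i\<in>UNIV. \<Sum>j\<in>UNIV. \<Sum>s\<in>UNIV. \<eta> i j * om' i s * Tc j s)
       - (1/2) * (\<Sum>k\<in>UNIV. \<Sum>j\<in>UNIV. \<Sum>s\<in>UNIV. om' k s * \<eta> k j * Cv j s)"
    by (simp add: sum_distrib_left sum_distrib_right right_diff_distrib left_diff_distrib
        sum_subtractf mult_ac)
  have b: "(\<Sum>k\<in>UNIV. \<Sum>j\<in>UNIV. \<Sum>s\<in>UNIV. om' k s * \<eta> k j * Cv j s)
     = (\<Sum>i\<in>UNIV. \<Sum>s\<in>UNIV. \<Sum>j\<in>UNIV. om' i s * \<eta> i j * Cv j s)"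
    by (intro sum.cong refl sum.swap)
  have c: "(\<Sum>i\<in>UNIV. \<Sum>j\<in>UNIV. (- om' i j / 2) * (- (\<Sum>k\<in>UNIV. \<eta> i k * Cv k j)))
     = (1/2) * (\<Sum>i\<in>UNIV. \<Sum>s\<in>UNIV. \<Sum>j\<in>UNIV. om' i s * \<eta> i j * Cv j s)"
    by (simp add: sum_distrib_left sum_negf mult_ac)
  show ?thesis unfolding a b c by simp
qed

lemma mset_sum_UNIV: "sum_mset (image_mset f (mset_set (UNIV::'a::finite set))) = (\<Sum>x\<in>UNIV. f x)"
  by (simp add: sum_unfold_sum_mset)

lemma image_sum_mset: "image_mset f (sum_mset MM) = sum_mset (image_mset (image_mset f) MM)"
  by (induction MM) auto

lemma sum_mset_sum_mset: "sum_mset (sum_mset MM) = sum_mset (image_mset sum_mset MM)"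
  by (induction MM) auto

lemma covd_zero: "covd Gam i (\<lambda>k x. 0) = (\<lambda>k x. 0)"
  unfolding covd_def by (simp add: pd_const_fun)

lemma sum_pairs: "(\<Sum>p\<in>(UNIV::('a::finite \<times> 'b::finite) set). f p) = (\<Sum>i\<in>UNIV. \<Sum>j\<in>UNIV. f (i, j))"
  by (subst sum.cartesian_product) simp

lemma sum_mset_bind: "sum_mset (image_mset F (sum_mset (image_mset \<phi> N))) = sum_mset (image_mset (\<lambda>y. sum_mset (image_mset F (\<phi> y))) N)"
  by (induction N) auto

lemma mset_UNIV_sum: "sum_mset (image_mset F (image_mset g (mset_set (UNIV::'a::finite set)))) = (\<Sum>k\<in>UNIV. F (g k))"
  by (simp only: multiset.map_comp mset_sum_UNIV comp_def)

lemma qinv_elem: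
  "sum_mset (image_mset F ((\<lambda>(a, b). {#(a, b)#} + image_mset (\<lambda>(i, j). \<Phi> i j a b) (mset_set (UNIV::('n::finite \<times> 'n) set))) y))
   = F y + (\<Sum>i\<in>UNIV. \<Sum>j\<in>UNIV. F (\<Phi> i j (fst y) (snd y)))"
  by (cases y) (simp add: mset_UNIV_sum sum_pairs)

lemma qinv_sum_gen:
  fixes g :: "'n::finite \<Rightarrow> 'b \<times> 'c"
  shows "sum_mset (image_mset F (sum_mset (image_mset (\<lambda>(a, b). {#(a, b)#} + image_mset (\<lambda>(i, j). \<Phi> i j a b) (mset_set (UNIV::('n \<times> 'n) set))) (image_mset g (mset_set UNIV)))))
   = (\<Sum>k\<in>UNIV. F (g k) + (\<Sum>i\<in>UNIV. \<Sum>j\<in>UNIV. F (\<Phi> i j (fst (g k)) (snd (g k)))))"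
  by (subst sum_mset_bind) (simp only: mset_UNIV_sum qinv_elem)

lemma qinv_sum:
  fixes g :: "'n::finite \<Rightarrow> ('n form1 \<times> 'n form1) \<times> ('n form1 \<times> 'n form1)"
  shows
  "sum_mset (image_mset F (qinv om Gam (image_mset g (mset_set UNIV)))) =
   (\<Sum>k\<in>UNIV. F (g k) + (\<Sum>i\<in>UNIV. \<Sum>j\<in>UNIV.
      F (lsc (lmul (\<lambda>x. - complex_of_real (om i j x) / 2) (lcovd Gam i (fst (g k)))), lcovd Gam j (snd (g k)))))"
  unfolding qinv_def qinv_sum_gen ..

lemma W_nablaQ:
  "snd (Wedge1 om Gam (nablaQ om Gam xi)) m n x =
     (\<Sum>k\<in>UNIV. snd (wedge1 om Gam (ldx k) (lcovd Gam k xi)) m n x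
        + (\<Sum>i\<in>UNIV. \<Sum>j\<in>UNIV. snd (wedge1 om Gam
             (lsc (lmul (\<lambda>x. - complex_of_real (om i j x) / 2) (lcovd Gam i (ldx k))))
             (lcovd Gam j (lcovd Gam k xi))) m n x))
   + (\<Sum>i\<in>UNIV. \<Sum>j\<in>UNIV. \<Sum>k\<in>UNIV. snd (wedge1 om Gam
        (lsc (lmul (\<lambda>x. - complex_of_real (om i j x) / 2) (ldx k)))
        (lcomm Gam k j (lcovd Gam i xi))) m n x)"
proof -
  define F where "F = (\<lambda>(a, b). snd (wedge1 om Gam a b) m n x)"
  have 1: "snd (Wedge1 om Gam M) m n x = sum_mset (image_mset F M)" for M
    by (simp add: Wedge1_def F_def)
  show ?thesis
    unfolding 1 nablaQ_def image_mset_union sum_mset.union qinv_sum mset_UNIV_sum sum_pairs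
    by (simp add: F_def)
qed

lemma t1:
  "snd (wedge1 om Gam (ldx k) (lcovd Gam k xi)) m n x =
     dx k m x * covd Gam k (snd xi) n x
   + (\<Sum>i\<in>UNIV. \<Sum>j\<in>UNIV. complex_of_real (om i j x) / 2 * (covd Gam i (dx k) m x * covd Gam j (covd Gam k (fst xi)) n x))
   + (\<Sum>i\<in>UNIV. \<Sum>j\<in>UNIV. Hform om Gam i j m n x * dx k i x * covd Gam k (fst xi) j x)"
  by (simp add: wedge1_def ldx_def lcovd_def wedge_def)

lemma t2:
  "snd (wedge1 om Gam (lsc (lmul c (lcovd Gam i (ldx k)))) (lcovd Gam j (lcovd Gam k xi))) m n x =
     c x * covd Gam i (dx k) m x * covd Gam j (covd Gam k (fst xi)) n x"
  by (simp add: wedge1_def ldx_def lcovd_def wedge_def lsc_def lmul_def covd_zero)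

lemma t3:
  "snd (wedge1 om Gam (lsc (lmul c (ldx k))) (lcomm Gam k j (lcovd Gam i xi))) m n x =
     c x * dx k m x * (covd Gam k (covd Gam j (covd Gam i (fst xi))) n x - covd Gam j (covd Gam k (covd Gam i (fst xi))) n x)"
  by (simp add: wedge1_def ldx_def lcovd_def wedge_def lsc_def lmul_def covd_zero lcomm_def lsub_def)

lemma dx_app: "dx k m x = (if m = k then 1 else 0)"
  by (simp add: dx_def)

lemma sum_dx: "(\<Sum>k\<in>UNIV. dx k m x * f k) = f m"
proof -
  have "(\<Sum>k\<in>UNIV. dx k m x * f k) = (\<Sum>k\<in>UNIV. if m = k then f k else 0)"
    by (rule sum.cong) (auto simp: dx_app)
  then show ?thesis by simp
qed

lemma sum_dx2: "(\<Sum>k\<in>UNIV. a * dx k m x * f k) = a * f m"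
  using sum_dx[of m x "\<lambda>k. a * f k"] by (simp add: sum_distrib_left mult_ac)

lemma snd_W:
  "snd (Wedge1 om Gam (nablaQ om Gam xi)) m n x =
     covd Gam m (snd xi) n x
   + (\<Sum>k\<in>UNIV. \<Sum>j\<in>UNIV. Hform om Gam k j m n x * covd Gam k (fst xi) j x)
   + (\<Sum>i\<in>UNIV. \<Sum>j\<in>UNIV. (- complex_of_real (om i j x) / 2) *
        (covd Gam m (covd Gam j (covd Gam i (fst xi))) n x - covd Gam j (covd Gam m (covd Gam i (fst xi))) n x))"
proof -
  have k: "snd (wedge1 om Gam (ldx k) (lcovd Gam k xi)) m n x
        + (\<Sum>i\<in>UNIV. \<Sum>j\<in>UNIV. snd (wedge1 om Gam
             (lsc (lmul (\<lambda>x. - complex_of_real (om i j x) / 2) (lcovd Gam i (ldx k))))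
             (lcovd Gam j (lcovd Gam k xi))) m n x)
     = dx k m x * covd Gam k (snd xi) n x + (\<Sum>j\<in>UNIV. Hform om Gam k j m n x * covd Gam k (fst xi) j x)" for k
  proof -
    have a: "(\<Sum>i\<in>UNIV. \<Sum>j\<in>UNIV. snd (wedge1 om Gam
             (lsc (lmul (\<lambda>x. - complex_of_real (om i j x) / 2) (lcovd Gam i (ldx k))))
             (lcovd Gam j (lcovd Gam k xi))) m n x)
       = - (\<Sum>i\<in>UNIV. \<Sum>j\<in>UNIV. complex_of_real (om i j x) / 2 * (covd Gam i (dx k) m x * covd Gam j (covd Gam k (fst xi)) n x))"
      unfolding t2 by (simp add: sum_negf mult.assoc)
    have b: "(\<Sum>i\<in>UNIV. \<Sum>j\<in>UNIV. Hform om Gam i j m n x * dx k i x * covd Gam k (fst xi) j x)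
       = (\<Sum>j\<in>UNIV. Hform om Gam k j m n x * covd Gam k (fst xi) j x)"
    proof -
      have "(\<Sum>j\<in>UNIV. Hform om Gam i j m n x * dx k i x * covd Gam k (fst xi) j x)
         = (if i = k then (\<Sum>j\<in>UNIV. Hform om Gam k j m n x * covd Gam k (fst xi) j x) else 0)" for i
        by (cases "i = k") (simp_all add: dx_app)
      then show ?thesis by simp
    qed
    show ?thesis unfolding a t1 b by simp
  qed
  have c: "(\<Sum>k\<in>UNIV. dx k m x * covd Gam k (snd xi) n x + (\<Sum>j\<in>UNIV. Hform om Gam k j m n x * covd Gam k (fst xi) j x))
     = covd Gam m (snd xi) n x + (\<Sum>k\<in>UNIV. \<Sum>j\<in>UNIV. Hform om Gam k j m n x * covd Gam k (fst xi) j x)"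
    by (simp add: sum.distrib sum_dx)
  have d: "(\<Sum>i\<in>UNIV. \<Sum>j\<in>UNIV. \<Sum>k\<in>UNIV. snd (wedge1 om Gam
        (lsc (lmul (\<lambda>x. - complex_of_real (om i j x) / 2) (ldx k)))
        (lcomm Gam k j (lcovd Gam i xi))) m n x)
     = (\<Sum>i\<in>UNIV. \<Sum>j\<in>UNIV. (- complex_of_real (om i j x) / 2) *
        (covd Gam m (covd Gam j (covd Gam i (fst xi))) n x - covd Gam j (covd Gam m (covd Gam i (fst xi))) n x))"
    unfolding t3 sum_dx2 ..
  show ?thesis unfolding W_nablaQ k c d ..
qed

lemma fst_W:
  "fst (Wedge1 om Gam (nablaQ om Gam xi)) m n x = covd Gam m (fst xi) n x"
proof -
  define F where "F = (\<lambda>(a, b). fst (wedge1 om Gam a b) m n x)"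
  have 1: "fst (Wedge1 om Gam M) m n x = sum_mset (image_mset F M)" for M
    by (simp add: Wedge1_def F_def)
  show ?thesis
    unfolding 1 nablaQ_def image_mset_union sum_mset.union qinv_sum mset_UNIV_sum sum_pairs
    by (simp add: F_def wedge1_def wedge_def lsc_def ldx_def lcovd_def sum_dx)
qed

lemma ctorsion_eq: "ctorsion Gam eta m n x = covd Gam m eta n x - pd m (eta n) x"
  by (simp add: ctorsion_def wedge_def dform_def sum_dx)

theorem proposition4p9:
  fixes U :: "(real^'n::finite) set"
    and om :: "'n \<Rightarrow> 'n \<Rightarrow> real^'n \<Rightarrow> real"
    and Gam :: "'n \<Rightarrow> 'n \<Rightarrow> 'n \<Rightarrow> real^'n \<Rightarrow> real"
    and xi :: "('n \<Rightarrow> real^'n \<Rightarrow> complex) \<times> ('n \<Rightarrow> real^'n \<Rightarrow> complex)"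
  assumes "open U"
    and "\<And>i j. smooth_in (om i j) U"
    and "\<And>i j k. smooth_in (Gam i j k) U"
    and "\<And>k. smooth_in (fst xi k) U"
    and "\<And>k. smooth_in (snd xi k) U"
    and "poisson_bivector U om"
    and "poisson_compatible U om Gam"
  shows "eq2 U (fst (qtorsion om Gam xi)) (ctorsion Gam (fst xi)) \<and>
         eq2 U (snd (qtorsion om Gam xi))
           (\<lambda>m n x. ctorsion Gam (snd xi) m n x
              + (1/4) * (\<Sum>i\<in>UNIV. \<Sum>j\<in>UNIV. \<Sum>s\<in>UNIV.
                   covd Gam i (fst xi) j x * complex_of_real (om i s x)
                   * complex_of_real (tors_cd Gam j n m s x)))"
proof -
  have G: "\<And>i j k. Dinf U (Gam i j k)" using assms(3) smooth_Dinf by blast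
  have A: "\<And>k. Dinf U (fst xi k)" using assms(4) smooth_Dinf by blast
  have fst_eq: "fst (qtorsion om Gam xi) m n x = ctorsion Gam (fst xi) m n x" for m n x
    by (simp add: qtorsion_def fst_W ctorsion_eq dform_def)
  have snd_eq: "snd (qtorsion om Gam xi) m n x = ctorsion Gam (snd xi) m n x
              + (1/4) * (\<Sum>i\<in>UNIV. \<Sum>j\<in>UNIV. \<Sum>s\<in>UNIV.
                   covd Gam i (fst xi) j x * complex_of_real (om i s x)
                   * complex_of_real (tors_cd Gam j n m s x))" if x: "x \<in> U" for m n x
  proof -
    have cm: "covd Gam m (covd Gam j (covd Gam i (fst xi))) n x - covd Gam j (covd Gam m (covd Gam i (fst xi))) n x
       = - (\<Sum>k\<in>UNIV. covd Gam i (fst xi) k x * curv Gam k n m j x)" for i j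
      by (rule comm[OF assms(1) x G Dinf_covd[OF assms(1) G A]])
    have H: "Hform om Gam k j m n x = (1/4) * (\<Sum>s\<in>UNIV. complex_of_real (om k s x) *
      (complex_of_real (tors_cd Gam j n m s x) - 2 * curv Gam j n m s x))" for k j
      by (simp add: Hform_def)
    have "snd (qtorsion om Gam xi) m n x = covd Gam m (snd xi) n x - pd m (snd xi n) x
       + ((\<Sum>k\<in>UNIV. \<Sum>j\<in>UNIV. Hform om Gam k j m n x * covd Gam k (fst xi) j x)
       + (\<Sum>i\<in>UNIV. \<Sum>j\<in>UNIV. (- complex_of_real (om i j x) / 2) *
        (covd Gam m (covd Gam j (covd Gam i (fst xi))) n x - covd Gam j (covd Gam m (covd Gam i (fst xi))) n x)))"
      by (simp add: qtorsion_def snd_W dform_def)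
    also have "(\<Sum>k\<in>UNIV. \<Sum>j\<in>UNIV. Hform om Gam k j m n x * covd Gam k (fst xi) j x)
       + (\<Sum>i\<in>UNIV. \<Sum>j\<in>UNIV. (- complex_of_real (om i j x) / 2) *
        (covd Gam m (covd Gam j (covd Gam i (fst xi))) n x - covd Gam j (covd Gam m (covd Gam i (fst xi))) n x))
      = (1/4) * (\<Sum>i\<in>UNIV. \<Sum>j\<in>UNIV. \<Sum>s\<in>UNIV.
                   covd Gam i (fst xi) j x * complex_of_real (om i s x)
                   * complex_of_real (tors_cd Gam j n m s x))"
      unfolding cm H
      by (rule final_alg[of "\<lambda>i j. complex_of_real (om i j x)" "\<lambda>j s. complex_of_real (tors_cd Gam j n m s x)"
            "\<lambda>j s. curv Gam j n m s x" "\<lambda>i j. covd Gam i (fst xi) j x"])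
    finally show ?thesis by (simp add: ctorsion_eq)
  qed
  show ?thesis unfolding eq2_def using fst_eq snd_eq by simp
qed


end
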